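(* Let $M_1$ and $M_2$ be finite-horizon MDPs with the same state space $\mathcal S$, action space $\mathcal A$, reward space $\mathcal R$ and horizon $H$. If $\max_{s,a}\|P^{M_1}(\cdot\mid s,a)-P^{M_2}(\cdot\mid s,a)\|_1\le\tilde\epsilon_P$ and $\max_{s,a,r}|R^{M_1}(r\mid s,a)-R^{M_2}(r\mid s,a)|\le\tilde\epsilon_R$, then for every policy $\pi$, $$\|\rho_\pi^{M_1}(s)-\rho_\pi^{M_2}(s)\|_1+\|\rho_\pi^{M_1}(s,a,r)-\rho_\pi^{M_2}(s,a,r)\|_1\le|\mathcal S|(|\mathcal A||\mathcal R|+1)\frac{H-1}{2}\tilde\epsilon_P+|\mathcal S||\mathcal A||\mathcal R|\tilde\epsilon_R.$$
   Context: Finite-horizon MDPs have finite spaces, a common fixed initial state $s_0$, and the state space partitioned into disjoint timestep layers $\mathcal S_h$. Visitation distributions of $\pi$ in an MDP with transition $P$ and reward distribution $R$: $\rho_\pi(s_0)=1/H$, $\rho_\pi(s)=\sum_{\tilde s\in\mathcal S_{h-1},\tilde a}\rho_\pi(\tilde s)\pi(\tilde a\mid\tilde s)P(s\mid\tilde s,\tilde a)$ for $s\in\mathcal S_h$, $h>0$; $\rho_\pi(s,a,r)=\rho_\pi(s)\pi(a\mid s)R(r\mid s,a)$. *)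

theory Defs
  imports Complex_Main
begin

text \<open>The state space is partitioned into layers given by layer :: 's => nat (layer s = h
  means s is in S_h), with horizon H, so layers are 0..H-1, and S_0 = {s0}.
  P s a s' is the transition probability P(s' | s, a), R s a r is R(r | s, a).
  Transitions from layer h (h+1 < H) go to layer h+1; transitions out of the last
  layer are unconstrained (they never matter).\<close>

definition stoch :: "('x::finite \<Rightarrow> real) \<Rightarrow> bool" where
  "stoch p \<longleftrightarrow> (\<forall>x. 0 \<le> p x) \<and> (\<Sum>x\<in>UNIV. p x) = 1"

definition fh_mdp ::
  "nat \<Rightarrow> ('s::finite \<Rightarrow> nat) \<Rightarrow> 's \<Rightarrow> ('s \<Rightarrow> 'a::finite \<Rightarrow> 's \<Rightarrow> real)
     \<Rightarrow> ('s \<Rightarrow> 'a \<Rightarrow> 'r::finite \<Rightarrow> real) \<Rightarrow> bool" where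
  "fh_mdp H layer s0 P R \<longleftrightarrow>
     1 \<le> H \<and>
     (\<forall>s. layer s < H) \<and>
     (\<forall>s. layer s = 0 \<longleftrightarrow> s = s0) \<and>
     (\<forall>s a. stoch (P s a)) \<and>
     (\<forall>s a. stoch (R s a)) \<and>
     (\<forall>s a s'. layer s + 1 < H \<and> P s a s' \<noteq> 0 \<longrightarrow> layer s' = layer s + 1)"

definition policy :: "('s::finite \<Rightarrow> 'a::finite \<Rightarrow> real) \<Rightarrow> bool" where
  "policy \<pi> \<longleftrightarrow> (\<forall>s. stoch (\<pi> s))"

fun vis_layer ::
  "nat \<Rightarrow> ('s::finite \<Rightarrow> nat) \<Rightarrow> 's \<Rightarrow> ('s \<Rightarrow> 'a::finite \<Rightarrow> 's \<Rightarrow> real)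
     \<Rightarrow> ('s \<Rightarrow> 'a \<Rightarrow> real) \<Rightarrow> nat \<Rightarrow> 's \<Rightarrow> real" where
  "vis_layer H layer s0 P \<pi> 0 s = (if s = s0 then 1 / real H else 0)"
| "vis_layer H layer s0 P \<pi> (Suc h) s =
     (\<Sum>t\<in>{t. layer t = h}. \<Sum>a\<in>UNIV. vis_layer H layer s0 P \<pi> h t * \<pi> t a * P t a s)"

definition rho_s ::
  "nat \<Rightarrow> ('s::finite \<Rightarrow> nat) \<Rightarrow> 's \<Rightarrow> ('s \<Rightarrow> 'a::finite \<Rightarrow> 's \<Rightarrow> real)
     \<Rightarrow> ('s \<Rightarrow> 'a \<Rightarrow> real) \<Rightarrow> 's \<Rightarrow> real" where
  "rho_s H layer s0 P \<pi> s = vis_layer H layer s0 P \<pi> (layer s) s"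

definition rho_sar ::
  "nat \<Rightarrow> ('s::finite \<Rightarrow> nat) \<Rightarrow> 's \<Rightarrow> ('s \<Rightarrow> 'a::finite \<Rightarrow> 's \<Rightarrow> real)
     \<Rightarrow> ('s \<Rightarrow> 'a \<Rightarrow> 'r::finite \<Rightarrow> real) \<Rightarrow> ('s \<Rightarrow> 'a \<Rightarrow> real) \<Rightarrow> 's \<Rightarrow> 'a \<Rightarrow> 'r \<Rightarrow> real" where
  "rho_sar H layer s0 P R \<pi> s a r = rho_s H layer s0 P \<pi> s * \<pi> s a * R s a r"

end

theory Submission
  imports Defs
begin

lemma vis_nonneg:
  assumes "fh_mdp H layer s0 P R" "policy \<pi>"
  shows "0 \<le> vis_layer H layer s0 P \<pi> h s"
proof (induction h arbitrary: s)
  case 0 then show ?case by simp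
next
  case (Suc h)
  have "\<And>t a. 0 \<le> \<pi> t a" "\<And>t a s. 0 \<le> P t a s"
    using assms unfolding fh_mdp_def policy_def stoch_def by auto
  then show ?case using Suc by (auto intro!: sum_nonneg mult_nonneg_nonneg)
qed

lemma vis_mass:
  assumes M: "fh_mdp H layer s0 P R" and pol: "policy \<pi>"
  shows "(\<Sum>t\<in>{t. layer t = h}. vis_layer H layer s0 P \<pi> h t) \<le> 1 / real H"
proof (induction h)
  case 0
  have "(\<Sum>t\<in>{t. layer t = 0}. vis_layer H layer s0 P \<pi> 0 t)
      = (\<Sum>t\<in>{t. layer t = 0}. if t = s0 then 1 / real H else 0)" by simp
  also have "\<dots> \<le> 1 / real H"
    by (simp add: sum.delta[OF finite])
  finally show ?case .
next
  case (Suc h)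
  let ?v = "vis_layer H layer s0 P \<pi> h"
  have pn: "\<And>t a. 0 \<le> \<pi> t a" "\<And>t a s. 0 \<le> P t a s"
    using M pol unfolding fh_mdp_def policy_def stoch_def by auto
  have ps: "\<And>t a. (\<Sum>s\<in>UNIV. P t a s) = 1" "\<And>t. (\<Sum>a\<in>UNIV. \<pi> t a) = 1"
    using M pol unfolding fh_mdp_def policy_def stoch_def by auto
  have vn: "\<And>t. 0 \<le> ?v t" using vis_nonneg[OF M pol] by blast
  have "(\<Sum>s\<in>{s. layer s = Suc h}. vis_layer H layer s0 P \<pi> (Suc h) s)
     = (\<Sum>s\<in>{s. layer s = Suc h}. \<Sum>t\<in>{t. layer t = h}. \<Sum>a\<in>UNIV. ?v t * \<pi> t a * P t a s)"
    by simp
  also have "\<dots> \<le> (\<Sum>s\<in>UNIV. \<Sum>t\<in>{t. layer t = h}. \<Sum>a\<in>UNIV. ?v t * \<pi> t a * P t a s)"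
    by (rule sum_mono2) (simp_all add: sum_nonneg vn pn)
  also have "\<dots> = (\<Sum>t\<in>{t. layer t = h}. \<Sum>a\<in>UNIV. \<Sum>s\<in>UNIV. ?v t * \<pi> t a * P t a s)"
    by (subst sum.swap) (rule sum.cong[OF refl], rule sum.swap)
  also have "\<dots> = (\<Sum>t\<in>{t. layer t = h}. ?v t)"
    by (simp add: sum_distrib_left[symmetric] ps)
  also have "\<dots> \<le> 1 / real H" by (rule Suc)
  finally show ?case .
qed


lemma vis_diff:
  assumes M1: "fh_mdp H layer s0 P1 R1" and M2: "fh_mdp H layer s0 P2 R2"
    and hP: "\<forall>s a. (\<Sum>s'\<in>UNIV. \<bar>P1 s a s' - P2 s a s'\<bar>) \<le> epsP"
    and pol: "policy \<pi>"
  shows "(\<Sum>s\<in>{s. layer s = h}. \<bar>vis_layer H layer s0 P1 \<pi> h s - vis_layer H layer s0 P2 \<pi> h s\<bar>)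
           \<le> real h * epsP / real H"
proof (induction h)
  case 0 then show ?case by simp
next
  case (Suc h)
  let ?v1 = "vis_layer H layer s0 P1 \<pi> h" and ?v2 = "vis_layer H layer s0 P2 \<pi> h"
  let ?L = "{t. layer t = h}"
  have pn: "\<And>t a. 0 \<le> \<pi> t a" "\<And>t a s. 0 \<le> P1 t a s"
    using M1 pol unfolding fh_mdp_def policy_def stoch_def by auto
  have ps: "\<And>t a. (\<Sum>s\<in>UNIV. P1 t a s) = 1" "\<And>t. (\<Sum>a\<in>UNIV. \<pi> t a) = 1"
    using M1 pol unfolding fh_mdp_def policy_def stoch_def by auto
  have vn: "\<And>t. 0 \<le> ?v2 t" using vis_nonneg[OF M2 pol] by blast
  have eP: "0 \<le> epsP"
  proof -
    fix a0 :: 'b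
    have "0 \<le> (\<Sum>s'\<in>UNIV. \<bar>P1 s0 a0 s' - P2 s0 a0 s'\<bar>)" by (rule sum_nonneg) simp
    then show ?thesis using hP by (meson order_trans)
  qed
  define f where "f s t a = \<bar>?v1 t - ?v2 t\<bar> * \<pi> t a * P1 t a s + ?v2 t * \<pi> t a * \<bar>P1 t a s - P2 t a s\<bar>" for s t a
  have fn: "0 \<le> f s t a" for s t a unfolding f_def using pn vn by (simp add: add_nonneg_nonneg)
  have pt: "\<bar>vis_layer H layer s0 P1 \<pi> (Suc h) s - vis_layer H layer s0 P2 \<pi> (Suc h) s\<bar>
      \<le> (\<Sum>t\<in>?L. \<Sum>a\<in>UNIV. f s t a)" for s
  proof -
    have eq: "vis_layer H layer s0 P1 \<pi> (Suc h) s - vis_layer H layer s0 P2 \<pi> (Suc h) s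
      = (\<Sum>t\<in>?L. \<Sum>a\<in>UNIV. ?v1 t * \<pi> t a * P1 t a s - ?v2 t * \<pi> t a * P2 t a s)"
      by (simp add: sum_subtractf)
    have "\<bar>\<Sum>t\<in>?L. \<Sum>a\<in>UNIV. ?v1 t * \<pi> t a * P1 t a s - ?v2 t * \<pi> t a * P2 t a s\<bar> \<le> (\<Sum>t\<in>?L. \<bar>\<Sum>a\<in>UNIV. ?v1 t * \<pi> t a * P1 t a s - ?v2 t * \<pi> t a * P2 t a s\<bar>)"
      by (rule sum_abs)
    also have "\<dots> \<le> (\<Sum>t\<in>?L. \<Sum>a\<in>UNIV. f s t a)"
    proof (rule sum_mono)
      fix t assume "t \<in> ?L"
      have "\<bar>\<Sum>a\<in>UNIV. ?v1 t * \<pi> t a * P1 t a s - ?v2 t * \<pi> t a * P2 t a s\<bar>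
          \<le> (\<Sum>a\<in>UNIV. \<bar>?v1 t * \<pi> t a * P1 t a s - ?v2 t * \<pi> t a * P2 t a s\<bar>)"
        by (rule sum_abs)
      also have "\<dots> \<le> (\<Sum>a\<in>UNIV. f s t a)"
      proof (rule sum_mono)
        fix a
        have "?v1 t * \<pi> t a * P1 t a s - ?v2 t * \<pi> t a * P2 t a s
            = (?v1 t - ?v2 t) * \<pi> t a * P1 t a s + ?v2 t * \<pi> t a * (P1 t a s - P2 t a s)"
          by (simp add: algebra_simps)
        also have "\<bar>\<dots>\<bar> \<le> \<bar>(?v1 t - ?v2 t) * \<pi> t a * P1 t a s\<bar> + \<bar>?v2 t * \<pi> t a * (P1 t a s - P2 t a s)\<bar>"
          by (rule abs_triangle_ineq)
        also have "\<dots> = f s t a" unfolding f_def using pn vn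
          by (simp add: abs_mult)
        finally show "\<bar>?v1 t * \<pi> t a * P1 t a s - ?v2 t * \<pi> t a * P2 t a s\<bar> \<le> f s t a" .
      qed
      finally show "\<bar>\<Sum>a\<in>UNIV. ?v1 t * \<pi> t a * P1 t a s - ?v2 t * \<pi> t a * P2 t a s\<bar> \<le> (\<Sum>a\<in>UNIV. f s t a)" .
    qed
    finally show ?thesis unfolding eq .
  qed
  have "(\<Sum>s\<in>{s. layer s = Suc h}. \<bar>vis_layer H layer s0 P1 \<pi> (Suc h) s - vis_layer H layer s0 P2 \<pi> (Suc h) s\<bar>)
      \<le> (\<Sum>s\<in>{s. layer s = Suc h}. \<Sum>t\<in>?L. \<Sum>a\<in>UNIV. f s t a)"
    by (rule sum_mono) (rule pt)
  also have "\<dots> \<le> (\<Sum>s\<in>UNIV. \<Sum>t\<in>?L. \<Sum>a\<in>UNIV. f s t a)"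
    by (rule sum_mono2) (simp_all add: sum_nonneg fn)
  also have "\<dots> = (\<Sum>t\<in>?L. \<Sum>a\<in>UNIV. \<Sum>s\<in>UNIV. f s t a)"
    by (subst sum.swap) (rule sum.cong[OF refl], rule sum.swap)
  also have "\<dots> \<le> (\<Sum>t\<in>?L. \<Sum>a\<in>UNIV. \<bar>?v1 t - ?v2 t\<bar> * \<pi> t a + ?v2 t * \<pi> t a * epsP)"
  proof (intro sum_mono)
    fix t a
    have "(\<Sum>s\<in>UNIV. f s t a) = \<bar>?v1 t - ?v2 t\<bar> * \<pi> t a * (\<Sum>s\<in>UNIV. P1 t a s)
        + ?v2 t * \<pi> t a * (\<Sum>s\<in>UNIV. \<bar>P1 t a s - P2 t a s\<bar>)"
      unfolding f_def by (simp add: sum.distrib sum_distrib_left)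
    also have "\<dots> \<le> \<bar>?v1 t - ?v2 t\<bar> * \<pi> t a + ?v2 t * \<pi> t a * epsP"
      using hP pn vn ps by (simp add: mult_left_mono)
    finally show "(\<Sum>s\<in>UNIV. f s t a) \<le> \<bar>?v1 t - ?v2 t\<bar> * \<pi> t a + ?v2 t * \<pi> t a * epsP" .
  qed
  also have "\<dots> = (\<Sum>t\<in>?L. \<bar>?v1 t - ?v2 t\<bar>) + (\<Sum>t\<in>?L. ?v2 t) * epsP"
  proof -
    have "(\<Sum>t\<in>?L. \<Sum>a\<in>UNIV. \<bar>?v1 t - ?v2 t\<bar> * \<pi> t a + ?v2 t * \<pi> t a * epsP)
       = (\<Sum>t\<in>?L. \<bar>?v1 t - ?v2 t\<bar> * (\<Sum>a\<in>UNIV. \<pi> t a) + ?v2 t * (\<Sum>a\<in>UNIV. \<pi> t a) * epsP)"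
      by (simp add: sum.distrib sum_distrib_left sum_distrib_right)
    also have "\<dots> = (\<Sum>t\<in>?L. \<bar>?v1 t - ?v2 t\<bar> + ?v2 t * epsP)" by (simp add: ps)
    also have "\<dots> = (\<Sum>t\<in>?L. \<bar>?v1 t - ?v2 t\<bar>) + (\<Sum>t\<in>?L. ?v2 t) * epsP"
      by (simp add: sum.distrib sum_distrib_right)
    finally show ?thesis .
  qed
  also have "\<dots> \<le> real h * epsP / real H + 1 / real H * epsP"
    by (intro add_mono Suc mult_right_mono vis_mass[OF M2 pol] eP)
  also have "\<dots> = real (Suc h) * epsP / real H" by (simp add: add_divide_distrib algebra_simps)
  finally show ?case .
qed


lemma sum_nat_real: "(\<Sum>h<H. real h) = real H * (real H - 1) / 2"
  by (induction H) (simp_all add: field_simps)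

lemma sum_rho_s_layers:
  assumes M: "fh_mdp H layer s0 P R"
  shows "(\<Sum>s\<in>UNIV. f s) = (\<Sum>h<H. \<Sum>s\<in>{s. layer s = h}. f s)"
proof -
  have "layer ` UNIV \<subseteq> {..<H}" using M unfolding fh_mdp_def by auto
  from sum.group[OF finite finite_lessThan this, of f] show ?thesis by simp
qed

theorem lemma8:
  fixes H :: nat and layer :: "'s::finite \<Rightarrow> nat" and s0 :: 's
    and P1 P2 :: "'s \<Rightarrow> 'a::finite \<Rightarrow> 's \<Rightarrow> real"
    and R1 R2 :: "'s \<Rightarrow> 'a \<Rightarrow> 'r::finite \<Rightarrow> real"
    and \<pi> :: "'s \<Rightarrow> 'a \<Rightarrow> real"
    and epsP epsR :: real
  assumes M1: "fh_mdp H layer s0 P1 R1"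
    and M2: "fh_mdp H layer s0 P2 R2"
    and hP: "\<forall>s a. (\<Sum>s'\<in>UNIV. \<bar>P1 s a s' - P2 s a s'\<bar>) \<le> epsP"
    and hR: "\<forall>s a r. \<bar>R1 s a r - R2 s a r\<bar> \<le> epsR"
    and pol: "policy \<pi>"
  shows "(\<Sum>s\<in>UNIV. \<bar>rho_s H layer s0 P1 \<pi> s - rho_s H layer s0 P2 \<pi> s\<bar>)
       + (\<Sum>(s, a, r)\<in>UNIV. \<bar>rho_sar H layer s0 P1 R1 \<pi> s a r - rho_sar H layer s0 P2 R2 \<pi> s a r\<bar>)
       \<le> real (card (UNIV :: 's set)) * (real (card (UNIV :: 'a set)) * real (card (UNIV :: 'r set)) + 1) * ((real H - 1) / 2) * epsP
         + real (card (UNIV :: 's set)) * real (card (UNIV :: 'a set)) * real (card (UNIV :: 'r set)) * epsR"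
proof -
  let ?r1 = "rho_s H layer s0 P1 \<pi>" and ?r2 = "rho_s H layer s0 P2 \<pi>"
  let ?v1 = "vis_layer H layer s0 P1 \<pi>" and ?v2 = "vis_layer H layer s0 P2 \<pi>"
  have H1: "1 \<le> H" using M1 unfolding fh_mdp_def by simp
  have pn: "\<And>t a. 0 \<le> \<pi> t a" "\<And>t a r. 0 \<le> R1 t a r"
    using M1 pol unfolding fh_mdp_def policy_def stoch_def by auto
  have ps: "\<And>t a. (\<Sum>r\<in>UNIV. R1 t a r) = 1" "\<And>t. (\<Sum>a\<in>UNIV. \<pi> t a) = 1"
    using M1 pol unfolding fh_mdp_def policy_def stoch_def by auto
  have r2n: "\<And>s. 0 \<le> ?r2 s" unfolding rho_s_def using vis_nonneg[OF M2 pol] by blast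
  have eP: "0 \<le> epsP"
  proof -
    fix a0 :: 'a
    have "0 \<le> (\<Sum>s'\<in>UNIV. \<bar>P1 s0 a0 s' - P2 s0 a0 s'\<bar>)" by (rule sum_nonneg) simp
    then show ?thesis using hP by (meson order_trans)
  qed
  have eR: "0 \<le> epsR" using hR by (meson order_trans abs_ge_zero)
  define A where "A = (\<Sum>s\<in>UNIV. \<bar>?r1 s - ?r2 s\<bar>)"
  have A0: "0 \<le> A" unfolding A_def by (rule sum_nonneg) simp
  have "A = (\<Sum>h<H. \<Sum>s\<in>{s. layer s = h}. \<bar>?r1 s - ?r2 s\<bar>)"
    unfolding A_def by (rule sum_rho_s_layers[OF M1])
  also have "\<dots> = (\<Sum>h<H. \<Sum>s\<in>{s. layer s = h}. \<bar>?v1 h s - ?v2 h s\<bar>)"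
    by (intro sum.cong refl) (simp add: rho_s_def)
  also have "\<dots> \<le> (\<Sum>h<H. real h * epsP / real H)"
    by (intro sum_mono vis_diff[OF M1 M2 hP pol])
  also have "\<dots> = (\<Sum>h<H. real h) * epsP / real H"
    by (simp add: sum_divide_distrib sum_distrib_right)
  also have "\<dots> = epsP * ((real H - 1) / 2)" using H1 by (simp add: sum_nat_real)
  finally have Ab: "A \<le> epsP * ((real H - 1) / 2)" .
  have "(\<Sum>s\<in>UNIV. ?r2 s) = (\<Sum>h<H. \<Sum>s\<in>{s. layer s = h}. ?r2 s)"
    by (rule sum_rho_s_layers[OF M1])
  also have "\<dots> = (\<Sum>h<H. \<Sum>s\<in>{s. layer s = h}. ?v2 h s)"
    by (intro sum.cong refl) (simp add: rho_s_def)
  also have "\<dots> \<le> (\<Sum>h<H. 1 / real H)"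
    by (intro sum_mono vis_mass[OF M2 pol])
  also have "\<dots> = 1" using H1 by simp
  finally have r2s: "(\<Sum>s\<in>UNIV. ?r2 s) \<le> 1" .
  define g where "g s a r = \<bar>rho_sar H layer s0 P1 R1 \<pi> s a r - rho_sar H layer s0 P2 R2 \<pi> s a r\<bar>" for s a r
  have "(\<Sum>(s, a, r)\<in>UNIV. \<bar>rho_sar H layer s0 P1 R1 \<pi> s a r - rho_sar H layer s0 P2 R2 \<pi> s a r\<bar>)
      = (\<Sum>(s, a, r)\<in>UNIV. g s a r)" unfolding g_def by simp
  also have "\<dots> = (\<Sum>s\<in>UNIV. \<Sum>a\<in>UNIV. \<Sum>r\<in>UNIV. g s a r)"
    by (simp add: sum.cartesian_product UNIV_Times_UNIV[symmetric] del: UNIV_Times_UNIV)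
  also have "\<dots> \<le> (\<Sum>s\<in>UNIV. \<Sum>a\<in>UNIV. \<Sum>r\<in>UNIV. \<bar>?r1 s - ?r2 s\<bar> * \<pi> s a * R1 s a r + ?r2 s * \<pi> s a * epsR)"
  proof (intro sum_mono)
    fix s a r
    have "rho_sar H layer s0 P1 R1 \<pi> s a r - rho_sar H layer s0 P2 R2 \<pi> s a r
        = (?r1 s - ?r2 s) * \<pi> s a * R1 s a r + ?r2 s * \<pi> s a * (R1 s a r - R2 s a r)"
      unfolding rho_sar_def by (simp add: algebra_simps)
    also have "\<bar>\<dots>\<bar> \<le> \<bar>(?r1 s - ?r2 s) * \<pi> s a * R1 s a r\<bar> + \<bar>?r2 s * \<pi> s a * (R1 s a r - R2 s a r)\<bar>"
      by (rule abs_triangle_ineq)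
    also have "\<dots> = \<bar>?r1 s - ?r2 s\<bar> * \<pi> s a * R1 s a r + ?r2 s * \<pi> s a * \<bar>R1 s a r - R2 s a r\<bar>"
      using pn r2n by (simp add: abs_mult)
    also have "\<dots> \<le> \<bar>?r1 s - ?r2 s\<bar> * \<pi> s a * R1 s a r + ?r2 s * \<pi> s a * epsR"
      using pn r2n hR by (intro add_left_mono mult_left_mono) simp_all
    finally show "g s a r \<le> \<bar>?r1 s - ?r2 s\<bar> * \<pi> s a * R1 s a r + ?r2 s * \<pi> s a * epsR"
      unfolding g_def .
  qed
  also have "\<dots> = (\<Sum>s\<in>UNIV. \<bar>?r1 s - ?r2 s\<bar> + ?r2 s * (real (card (UNIV :: 'r set)) * epsR))"
  proof (intro sum.cong refl)
    fix s
    have "(\<Sum>a\<in>UNIV. \<Sum>r\<in>UNIV. \<bar>?r1 s - ?r2 s\<bar> * \<pi> s a * R1 s a r + ?r2 s * \<pi> s a * epsR)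
       = (\<Sum>a\<in>UNIV. \<bar>?r1 s - ?r2 s\<bar> * \<pi> s a * (\<Sum>r\<in>UNIV. R1 s a r) + real (card (UNIV :: 'r set)) * (?r2 s * \<pi> s a * epsR))"
      by (simp add: sum.distrib sum_distrib_left)
    also have "\<dots> = (\<Sum>a\<in>UNIV. \<pi> s a * (\<bar>?r1 s - ?r2 s\<bar> + ?r2 s * (real (card (UNIV :: 'r set)) * epsR)))"
      by (simp add: ps algebra_simps)
    also have "\<dots> = \<bar>?r1 s - ?r2 s\<bar> + ?r2 s * (real (card (UNIV :: 'r set)) * epsR)"
      by (simp add: sum_distrib_right[symmetric] ps)
    finally show "(\<Sum>a\<in>UNIV. \<Sum>r\<in>UNIV. \<bar>?r1 s - ?r2 s\<bar> * \<pi> s a * R1 s a r + ?r2 s * \<pi> s a * epsR)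
       = \<bar>?r1 s - ?r2 s\<bar> + ?r2 s * (real (card (UNIV :: 'r set)) * epsR)" .
  qed
  also have "\<dots> = A + (\<Sum>s\<in>UNIV. ?r2 s) * (real (card (UNIV :: 'r set)) * epsR)"
    unfolding A_def by (simp add: sum.distrib sum_distrib_right)
  also have "\<dots> \<le> A + 1 * (real (card (UNIV :: 'r set)) * epsR)"
    using r2s eR by (intro add_left_mono mult_right_mono) simp_all
  finally have B: "(\<Sum>(s, a, r)\<in>UNIV. \<bar>rho_sar H layer s0 P1 R1 \<pi> s a r - rho_sar H layer s0 P2 R2 \<pi> s a r\<bar>)
      \<le> A + real (card (UNIV :: 'r set)) * epsR" by simp
  define cS where "cS = real (card (UNIV :: 's set))"
  define cA where "cA = real (card (UNIV :: 'a set))"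
  define cR where "cR = real (card (UNIV :: 'r set))"
  have cS1: "1 \<le> cS" unfolding cS_def by (simp add: Suc_le_eq finite_UNIV_card_ge_0)
  have cA1: "1 \<le> cA" unfolding cA_def by (simp add: Suc_le_eq finite_UNIV_card_ge_0)
  have cR1: "1 \<le> cR" unfolding cR_def by (simp add: Suc_le_eq finite_UNIV_card_ge_0)
  define X where "X = ((real H - 1) / 2) * epsP"
  have X0: "0 \<le> X" unfolding X_def using H1 eP by simp
  have "2 \<le> cS * (cA * cR + 1)"
  proof -
    have "1 \<le> cA * cR" using cA1 cR1 by (metis mult_mono' mult_1 zero_le_one order_trans)
    then have "2 \<le> cA * cR + 1" by simp
    also have "\<dots> \<le> cS * (cA * cR + 1)" using cS1 \<open>1 \<le> cA * cR\<close> by (simp add: mult_le_cancel_right1)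
    finally show ?thesis .
  qed
  then have t1: "2 * X \<le> cS * (cA * cR + 1) * X" using X0 by (rule mult_right_mono)
  have "cR \<le> cS * cA * cR"
  proof -
    have "1 \<le> cS * cA" using cA1 cS1 by (metis mult_mono' mult_1 zero_le_one order_trans)
    then show ?thesis using cR1 by (simp add: mult_le_cancel_right1)
  qed
  then have t2: "cR * epsR \<le> cS * cA * cR * epsR" using eR by (rule mult_right_mono)
  have "A + (A + cR * epsR) \<le> 2 * X + cR * epsR" using Ab B unfolding X_def by (simp add: mult.commute)
  also have "\<dots> \<le> cS * (cA * cR + 1) * X + cS * cA * cR * epsR" using t1 t2 by simp
  finally have fin: "A + (A + cR * epsR) \<le> cS * (cA * cR + 1) * X + cS * cA * cR * epsR" .
  have eqR: "cS * (cA * cR + 1) * X + cS * cA * cR * epsR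
     = real (card (UNIV :: 's set)) * (real (card (UNIV :: 'a set)) * real (card (UNIV :: 'r set)) + 1) * ((real H - 1) / 2) * epsP
         + real (card (UNIV :: 's set)) * real (card (UNIV :: 'a set)) * real (card (UNIV :: 'r set)) * epsR"
    unfolding cS_def cA_def cR_def X_def by (simp only: mult.assoc)
  show ?thesis using B fin eqR unfolding A_def cR_def by linarith
qed

end
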